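(* Let $(X,d)$ be a compact metric space and $F:X\to 2^X$ a continuous, onto set-valued map. Then $F$ has the shadowing property if and only if the set-valued map $F_{inv}$ on $(\mathrm{Orb}_{inv}(X),\rho)$ has the shadowing property.
   Context: $X$ has diameter $1$; $2^X$ is the family of nonempty compact subsets of $X$. $F$ is upper semicontinuous if for every $x$ and open $U\supset F(x)$ there is a neighborhood $V$ of $x$ with $F(y)\subset U$ for $y\in V$; lower semicontinuous if for every $x$ and open $U$ with $F(x)\cap U\ne\emptyset$ there is a neighborhood $V$ of $x$ with $F(y)\cap U\neq\emptyset$ for $y\in V$; continuous if both. $F$ is onto if every $y$ lies in some $F(x)$. $\mathrm{Orb}_{inv}(X)=\{(x_0,x_1,\dots)\in X^{\mathbb N}: x_n\in F(x_{n+1})\ \forall n\}$ with metric $\rho((x_n),(y_n))=\sum_{n\ge0}d(x_n,y_n)/2^{n+1}$; $F_{inv}:\mathrm{Orb}_{inv}(X)\to 2^{\mathrm{Orb}_{inv}(X)}$, $F_{inv}((x_0,x_1,\dots))=\{(y,x_0,x_1,\dots): y\in F(x_0)\}$. For a set-valued map $G$ on a metric space $(Z,e)$: a $\delta$-pseudo-orbit is $\{z_n\}_{n\ge0}$ with $e(z_{n+1},G(z_n))<\delta$ for all $n$; a $G$-orbit is $(w_n)$ with $w_{n+1}\in G(w_n)$; $G$ has the shadowing property if for every $\varepsilon>0$ there is $\delta>0$ such that every $\delta$-pseudo-orbit $\{z_n\}$ admits a $G$-orbit $(w_n)$ with $e(z_n,w_n)<\varepsilon$ for all $n$. *)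

theory Defs
  imports "HOL-Analysis.Analysis"
begin

definition usc_on :: "'a::metric_space set \<Rightarrow> ('a \<Rightarrow> 'a set) \<Rightarrow> bool" where
  "usc_on X F \<longleftrightarrow> (\<forall>x\<in>X. \<forall>U. open U \<and> F x \<subseteq> U \<longrightarrow>
      (\<exists>r>0. \<forall>y\<in>X. dist y x < r \<longrightarrow> F y \<subseteq> U))"

definition lsc_on :: "'a::metric_space set \<Rightarrow> ('a \<Rightarrow> 'a set) \<Rightarrow> bool" where
  "lsc_on X F \<longleftrightarrow> (\<forall>x\<in>X. \<forall>U. open U \<and> F x \<inter> U \<noteq> {} \<longrightarrow>
      (\<exists>r>0. \<forall>y\<in>X. dist y x < r \<longrightarrow> F y \<inter> U \<noteq> {}))"

definition setmap_continuous_on :: "'a::metric_space set \<Rightarrow> ('a \<Rightarrow> 'a set) \<Rightarrow> bool" where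
  "setmap_continuous_on X F \<longleftrightarrow> usc_on X F \<and> lsc_on X F"

definition setmap_into_compacts :: "'a::metric_space set \<Rightarrow> ('a \<Rightarrow> 'a set) \<Rightarrow> bool" where
  "setmap_into_compacts X F \<longleftrightarrow> (\<forall>x\<in>X. F x \<noteq> {} \<and> compact (F x) \<and> F x \<subseteq> X)"

definition setmap_onto :: "'a set \<Rightarrow> ('a \<Rightarrow> 'a set) \<Rightarrow> bool" where
  "setmap_onto X F \<longleftrightarrow> (\<forall>y\<in>X. \<exists>x\<in>X. y \<in> F x)"

definition setdist_pt :: "('z \<Rightarrow> 'z \<Rightarrow> real) \<Rightarrow> 'z \<Rightarrow> 'z set \<Rightarrow> real" where
  "setdist_pt e z A = (INF a\<in>A. e z a)"

definition pseudo_orbit :: "'z set \<Rightarrow> ('z \<Rightarrow> 'z \<Rightarrow> real) \<Rightarrow> ('z \<Rightarrow> 'z set) \<Rightarrow> real \<Rightarrow> (nat \<Rightarrow> 'z) \<Rightarrow> bool" where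
  "pseudo_orbit Z e G \<delta> z \<longleftrightarrow> (\<forall>n. z n \<in> Z) \<and> (\<forall>n. setdist_pt e (z (Suc n)) (G (z n)) < \<delta>)"

definition is_orbit :: "'z set \<Rightarrow> ('z \<Rightarrow> 'z set) \<Rightarrow> (nat \<Rightarrow> 'z) \<Rightarrow> bool" where
  "is_orbit Z G w \<longleftrightarrow> (\<forall>n. w n \<in> Z) \<and> (\<forall>n. w (Suc n) \<in> G (w n))"

definition shadowing :: "'z set \<Rightarrow> ('z \<Rightarrow> 'z \<Rightarrow> real) \<Rightarrow> ('z \<Rightarrow> 'z set) \<Rightarrow> bool" where
  "shadowing Z e G \<longleftrightarrow> (\<forall>\<epsilon>>0. \<exists>\<delta>>0. \<forall>z. pseudo_orbit Z e G \<delta> z \<longrightarrow>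
      (\<exists>w. is_orbit Z G w \<and> (\<forall>n. e (z n) (w n) < \<epsilon>)))"

definition Orb_inv :: "'a set \<Rightarrow> ('a \<Rightarrow> 'a set) \<Rightarrow> (nat \<Rightarrow> 'a) set" where
  "Orb_inv X F = {s. (\<forall>n. s n \<in> X) \<and> (\<forall>n. s n \<in> F (s (Suc n)))}"

definition rho :: "(nat \<Rightarrow> 'a::metric_space) \<Rightarrow> (nat \<Rightarrow> 'a) \<Rightarrow> real" where
  "rho s t = (\<Sum>n. dist (s n) (t n) / 2 ^ Suc n)"

definition F_inv :: "('a \<Rightarrow> 'a set) \<Rightarrow> (nat \<Rightarrow> 'a) \<Rightarrow> (nat \<Rightarrow> 'a) set" where
  "F_inv F s = {case_nat y s | y. y \<in> F (s 0)}"

end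

theory Submission
  imports Defs
begin


lemma geo_head: "(\<Sum>i<N. 1 / (2::real) ^ Suc i) = 1 - 1 / 2 ^ N"
  by (induction N) (auto simp: field_simps)

lemma rho_summable:
  assumes "\<And>k. dist (s k) (t k) \<le> 1"
  shows "summable (\<lambda>n. dist (s n) (t n) / 2 ^ Suc n)"
proof (rule summable_comparison_test)
  show "\<exists>N. \<forall>n\<ge>N. norm (dist (s n) (t n) / 2 ^ Suc n) \<le> 1/2 * (1/2::real)^n"
    using assms by (auto simp: divide_simps power_divide)
  show "summable (\<lambda>n. 1/2 * (1/2::real)^n)"
    by (intro summable_mult summable_geometric) auto
qed

lemma rho_nonneg:
  assumes "\<And>k. dist (s k) (t k) \<le> 1"
  shows "0 \<le> rho s t"
  unfolding rho_def by (rule suminf_nonneg[OF rho_summable[OF assms]]) auto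

lemma rho_coord:
  assumes "\<And>k. dist (s k) (t k) \<le> 1"
  shows "dist (s k) (t k) / 2 ^ Suc k \<le> rho s t"
proof -
  have "sum (\<lambda>n. dist (s n) (t n) / 2 ^ Suc n) {k} \<le> rho s t"
    unfolding rho_def by (rule sum_le_suminf[OF rho_summable[OF assms]]) auto
  then show ?thesis by simp
qed

lemma rho_small:
  assumes B: "\<And>k. dist (s k) (t k) \<le> 1" and "\<eta> > 0"
    and L: "\<And>k. k < N \<Longrightarrow> dist (s k) (t k) < \<eta>"
  shows "rho s t < \<eta> + 1 / 2 ^ N"
proof -
  define f where "f n = dist (s n) (t n) / 2 ^ Suc n" for n
  have sf: "summable f" unfolding f_def by (rule rho_summable[OF B])
  have split: "rho s t = (\<Sum>n. f (n + N)) + (\<Sum>i<N. f i)"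
    unfolding rho_def f_def[symmetric] by (rule suminf_split_initial_segment[OF sf])
  have gs: "(\<lambda>n. 1 / 2 ^ Suc N * (1/2::real)^n) sums (1 / 2 ^ Suc N * (1 / (1 - 1/2)))"
    by (intro sums_mult geometric_sums) auto
  have tail: "(\<Sum>n. f (n + N)) \<le> 1 / 2 ^ N"
  proof -
    have "(\<Sum>n. f (n + N)) \<le> (\<Sum>n. 1 / 2 ^ Suc N * (1/2::real)^n)"
    proof (rule suminf_le)
      fix n show "f (n + N) \<le> 1 / 2 ^ Suc N * (1/2::real)^n"
        using B[of "n+N"] by (auto simp: f_def divide_simps power_add power_divide)
      show "summable (\<lambda>n. f (n + N))" using sf by (simp add: summable_iff_shift)
      show "summable (\<lambda>n. 1 / 2 ^ Suc N * (1/2::real)^n)" using gs by (rule sums_summable)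
    qed
    also have "\<dots> = 1 / 2 ^ N" using sums_unique[OF gs] by simp
    finally show ?thesis .
  qed
  have head: "(\<Sum>i<N. f i) < \<eta>"
  proof (cases "N = 0")
    case True then show ?thesis using \<open>\<eta>>0\<close> by simp
  next
    case False
    have "(\<Sum>i<N. f i) < (\<Sum>i<N. \<eta> * (1 / 2 ^ Suc i))"
      using False L by (intro sum_strict_mono) (auto simp: f_def divide_simps)
    also have "\<dots> = \<eta> * (\<Sum>i<N. 1 / 2 ^ Suc i)" by (rule sum_distrib_left[symmetric])
    also have "\<dots> = \<eta> * (1 - 1/2^N)" by (simp only: geo_head)
    also have "\<dots> \<le> \<eta>" using \<open>\<eta>>0\<close> by (simp add: mult_le_cancel_left1)
    finally show ?thesis .
  qed
  show ?thesis using split tail head by linarith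
qed



lemma setdist_lt:
  assumes "setdist_pt e z A < d" "A \<noteq> {}" "\<And>a. a \<in> A \<Longrightarrow> e z a \<ge> 0"
  shows "\<exists>a\<in>A. e z a < d"
proof -
  have "bdd_below ((\<lambda>a. e z a) ` A)" using assms(3) by (auto intro!: bdd_belowI[of _ 0])
  then show ?thesis using assms(1,2) unfolding setdist_pt_def by (simp add: cINF_less_iff)
qed

lemma setdist_le:
  assumes "a \<in> A" "\<And>a. a \<in> A \<Longrightarrow> e z a \<ge> 0"
  shows "setdist_pt e z A \<le> e z a"
proof -
  have "bdd_below ((\<lambda>a. e z a) ` A)" using assms(2) by (auto intro!: bdd_belowI[of _ 0])
  then show ?thesis using assms(1) unfolding setdist_pt_def by (simp add: cINF_lower)
qed

lemma finite_min_radius: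
  assumes "finite C" "\<And>c. c \<in> C \<Longrightarrow> \<exists>r>0. \<forall>b. P b \<and> dist b x < r \<longrightarrow> Q c b"
  shows "\<exists>r>0. \<forall>c\<in>C. \<forall>b. P b \<and> dist b x < r \<longrightarrow> Q c b"
  using assms
proof (induction C rule: finite_induct)
  case empty then show ?case by (auto intro: exI[of _ 1])
next
  case (insert c C)
  then obtain r1 where r1: "r1>0" "\<forall>c\<in>C. \<forall>b. P b \<and> dist b x < r1 \<longrightarrow> Q c b" by auto
  obtain r2 where r2: "r2>0" "\<forall>b. P b \<and> dist b x < r2 \<longrightarrow> Q c b" using insert.prems by auto
  show ?case using r1 r2 by (intro exI[of _ "min r1 r2"]) auto
qed

context
  fixes X :: "'a::metric_space set" and F :: "'a \<Rightarrow> 'a set"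
  assumes cX: "compact X" and dX: "diameter X = 1"
    and inC: "setmap_into_compacts X F"
    and cont: "setmap_continuous_on X F"
    and onto: "setmap_onto X F"
begin

lemma FX: "x \<in> X \<Longrightarrow> F x \<subseteq> X" using inC by (auto simp: setmap_into_compacts_def)
lemma Fne: "x \<in> X \<Longrightarrow> F x \<noteq> {}" using inC by (auto simp: setmap_into_compacts_def)
lemma Fcpt: "x \<in> X \<Longrightarrow> compact (F x)" using inC by (auto simp: setmap_into_compacts_def)

lemma dist1: "a \<in> X \<Longrightarrow> b \<in> X \<Longrightarrow> dist a b \<le> 1"
  using diameter_bounded_bound[OF compact_imp_bounded[OF cX]] dX by metis

lemma back_chain:
  assumes "x \<in> X" shows "\<exists>s\<in>Orb_inv X F. s 0 = x"
proof -
  define g where "g y = (SOME y'. y' \<in> X \<and> y \<in> F y')" for y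
  have g: "g y \<in> X \<and> y \<in> F (g y)" if "y \<in> X" for y
    using onto that unfolding setmap_onto_def g_def by (metis (mono_tags, lifting) someI_ex)
  define s where "s n = (g ^^ n) x" for n
  have sX: "s n \<in> X" for n by (induction n) (auto simp: s_def assms g)
  have "s n \<in> F (s (Suc n))" for n using g[OF sX[of n]] by (simp add: s_def)
  moreover have "s 0 = x" by (simp add: s_def)
  ultimately show ?thesis using sX unfolding Orb_inv_def by blast
qed

lemma ulsc:
  assumes "e > 0"
  shows "\<exists>g>0. \<forall>a\<in>X. \<forall>b\<in>X. dist a b < g \<longrightarrow> (\<forall>y\<in>F a. \<exists>y'\<in>F b. dist y y' < e)"
proof -
  have loc: "\<exists>r>0. \<forall>a\<in>X. \<forall>b\<in>X. dist a x < r \<longrightarrow> dist b x < r \<longrightarrow> (\<forall>y\<in>F a. \<exists>y'\<in>F b. dist y y' < e)"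
    if xX: "x \<in> X" for x
  proof -
    define U where "U = (\<Union>c\<in>F x. ball c (e/3))"
    have "open U" "F x \<subseteq> U" using assms by (auto simp: U_def)
    then obtain r1 where r1: "r1 > 0" "\<forall>a\<in>X. dist a x < r1 \<longrightarrow> F a \<subseteq> U"
      using cont xX unfolding setmap_continuous_on_def usc_on_def by blast
    obtain C where C: "C \<subseteq> F x" "finite C" "F x \<subseteq> (\<Union>c\<in>C. ball c (e/3))"
    proof -
      have "F x \<subseteq> \<Union>((\<lambda>c. ball c (e/3)) ` F x)" using assms by auto
      from compactE_image[OF Fcpt[OF xX] _ this] show ?thesis using that by auto
    qed
    have "\<exists>r>0. \<forall>c\<in>C. \<forall>b. b \<in> X \<and> dist b x < r \<longrightarrow> F b \<inter> ball c (e/3) \<noteq> {}"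
    proof (rule finite_min_radius[OF C(2)])
      fix c assume "c \<in> C"
      then have "F x \<inter> ball c (e/3) \<noteq> {}" using C(1) assms by auto
      then show "\<exists>r>0. \<forall>b. b \<in> X \<and> dist b x < r \<longrightarrow> F b \<inter> ball c (e/3) \<noteq> {}"
      proof -
        have "\<exists>r>0. \<forall>y\<in>X. dist y x < r \<longrightarrow> F y \<inter> ball c (e/3) \<noteq> {}"
          using cont xX \<open>F x \<inter> ball c (e/3) \<noteq> {}\<close> unfolding setmap_continuous_on_def lsc_on_def
          by (meson open_ball)
        then show ?thesis by blast
      qed
    qed
    then obtain r2 where r2: "r2>0" "\<forall>c\<in>C. \<forall>b. b \<in> X \<and> dist b x < r2 \<longrightarrow> F b \<inter> ball c (e/3) \<noteq> {}"
      by blast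
    show ?thesis
    proof (intro exI[of _ "min r1 r2"] conjI ballI impI)
      show "min r1 r2 > 0" using r1 r2 by auto
      fix a b y assume a: "a \<in> X" and b: "b \<in> X" and da: "dist a x < min r1 r2"
        and db: "dist b x < min r1 r2" and y: "y \<in> F a"
      have "y \<in> U" using r1 a da y by auto
      then obtain c where c: "c \<in> F x" "dist c y < e/3" by (auto simp: U_def)
      then obtain c' where c': "c' \<in> C" "dist c' c < e/3" using C(3) by auto
      have "F b \<inter> ball c' (e/3) \<noteq> {}" using r2 b db c'(1) by auto
      then obtain y' where y': "y' \<in> F b" "dist c' y' < e/3" by auto
      have "dist y y' < e"
        using c c' y' dist_triangle[of y y' c] dist_triangle[of c y' c'] by (simp add: dist_commute)
      then show "\<exists>y'\<in>F b. dist y y' < e" using y' by auto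
    qed
  qed
  then obtain r where r: "\<And>x. x \<in> X \<Longrightarrow> r x > 0 \<and> (\<forall>a\<in>X. \<forall>b\<in>X. dist a x < r x \<longrightarrow> dist b x < r x \<longrightarrow> (\<forall>y\<in>F a. \<exists>y'\<in>F b. dist y y' < e))"
    by metis
  have "X \<subseteq> \<Union>((\<lambda>x. ball x (r x)) ` X)" using r by force
  then obtain g where g: "g > 0" "\<And>x. x \<in> X \<Longrightarrow> \<exists>G\<in>((\<lambda>x. ball x (r x)) ` X). ball x g \<subseteq> G"
    using Heine_Borel_lemma[OF cX] by (metis (no_types, lifting) imageE open_ball)
  show ?thesis
  proof (intro exI[of _ g] conjI ballI impI)
    fix a b y assume a: "a \<in> X" and b: "b \<in> X" and ab: "dist a b < g" and y: "y \<in> F a"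
    obtain x where x: "x \<in> X" "ball a g \<subseteq> ball x (r x)" using g(2)[OF a] by auto
    have "a \<in> ball a g" "b \<in> ball a g" using g(1) ab by auto
    then have "a \<in> ball x (r x)" "b \<in> ball x (r x)" using x(2) by (meson subsetD)+
    then have "dist a x < r x" "dist b x < r x" by (auto simp: dist_commute)
    then show "\<exists>y'\<in>F b. dist y y' < e" using r[OF x(1)] a b y by blast
  qed (use g in auto)
qed


lemmas FX' = FX and Fne' = Fne and dist1' = dist1 and back_chain' = back_chain and ulsc' = ulsc
lemmas FX'' = FX and dist1'' = dist1 and back_chain'' = back_chain


lemma track:
  assumes "e > 0"
  shows "\<exists>\<gamma>>0. \<forall>p. (\<forall>i. p i \<in> X) \<longrightarrow> (\<forall>i. setdist_pt dist (p (Suc i)) (F (p i)) < \<gamma>) \<longrightarrow>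
     (\<exists>u. u 0 = p 0 \<and> (\<forall>j\<le>M. u j \<in> X \<and> dist (u j) (p j) < e) \<and> (\<forall>j<M. u (Suc j) \<in> F (u j)))"
  using assms
proof (induction M arbitrary: e)
  case 0
  show ?case
  proof (intro exI[of _ 1] conjI allI impI)
    fix p :: "nat \<Rightarrow> 'a"
    show "\<exists>u. u 0 = p 0 \<and> (\<forall>j\<le>0. u j \<in> X \<and> dist (u j) (p j) < e) \<and> (\<forall>j<0. u (Suc j) \<in> F (u j))"
      if "\<forall>i. p i \<in> X" using that 0 by (intro exI[of _ "\<lambda>_. p 0"]) auto
  qed simp
next
  case (Suc M)
  obtain g where g: "g > 0" "\<forall>a\<in>X. \<forall>b\<in>X. dist a b < g \<longrightarrow> (\<forall>y\<in>F a. \<exists>y'\<in>F b. dist y y' < e/2)"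
    using ulsc'[of "e/2"] Suc.prems by auto
  obtain \<gamma>1 where \<gamma>1: "\<gamma>1 > 0" "\<forall>p. (\<forall>i. p i \<in> X) \<longrightarrow> (\<forall>i. setdist_pt dist (p (Suc i)) (F (p i)) < \<gamma>1) \<longrightarrow>
     (\<exists>u. u 0 = p 0 \<and> (\<forall>j\<le>M. u j \<in> X \<and> dist (u j) (p j) < min e g) \<and> (\<forall>j<M. u (Suc j) \<in> F (u j)))"
    using Suc.IH[of "min e g"] Suc.prems g(1) by auto
  show ?case
  proof (intro exI[of _ "min \<gamma>1 (e/2)"] conjI allI impI)
    show "min \<gamma>1 (e/2) > 0" using \<gamma>1(1) Suc.prems by auto
    fix p assume pX: "\<forall>i. p i \<in> X" and pp: "\<forall>i. setdist_pt dist (p (Suc i)) (F (p i)) < min \<gamma>1 (e/2)"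
    then obtain u where u: "u 0 = p 0" "\<forall>j\<le>M. u j \<in> X \<and> dist (u j) (p j) < min e g"
      "\<forall>j<M. u (Suc j) \<in> F (u j)"
    proof -
      have "\<forall>i. setdist_pt dist (p (Suc i)) (F (p i)) < \<gamma>1" using pp by (meson min_less_iff_conj)
      then show ?thesis using \<gamma>1(2) pX that by blast
    qed
    obtain y where y: "y \<in> F (p M)" "dist (p (Suc M)) y < e/2"
      using setdist_lt[of dist "p (Suc M)" "F (p M)" "e/2"] pp Fne'[of "p M"] pX by force
    have "dist (p M) (u M) < g" using u(2) by (auto simp: dist_commute)
    then obtain y' where y': "y' \<in> F (u M)" "dist y y' < e/2"
      using g(2) pX u(2) y(1) by blast
    have y'X: "y' \<in> X" using FX' y'(1) u(2) by auto
    have dy': "dist y' (p (Suc M)) < e"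
      using y(2) y'(2) dist_triangle[of y' "p (Suc M)" y] by (simp add: dist_commute)
    show "\<exists>u. u 0 = p 0 \<and> (\<forall>j\<le>Suc M. u j \<in> X \<and> dist (u j) (p j) < e) \<and> (\<forall>j<Suc M. u (Suc j) \<in> F (u j))"
    proof (intro exI[of _ "u(Suc M := y')"] conjI allI impI)
      show "(u(Suc M := y')) 0 = p 0" using u(1) by simp
      fix j assume "j \<le> Suc M"
      then show "(u(Suc M := y')) j \<in> X" "dist ((u(Suc M := y')) j) (p j) < e"
        using u(2) y'X dy' by (auto simp: le_Suc_eq)
    next
      fix j assume "j < Suc M"
      then show "(u(Suc M := y')) (Suc j) \<in> F ((u(Suc M := y')) j)"
        using u(3) y'(1) by (auto simp: less_Suc_eq)
    qed
  qed
qed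



lemma OrbX: "s \<in> Orb_inv X F \<Longrightarrow> s k \<in> X" by (auto simp: Orb_inv_def)
lemma OrbF: "s \<in> Orb_inv X F \<Longrightarrow> s k \<in> F (s (Suc k))" by (auto simp: Orb_inv_def)

lemma rho_nonneg_X: "(\<And>k. s k \<in> X) \<Longrightarrow> (\<And>k. t k \<in> X) \<Longrightarrow> 0 \<le> rho s t"
  by (rule rho_nonneg) (simp add: dist1')

lemma caseX: "s \<in> Orb_inv X F \<Longrightarrow> y \<in> X \<Longrightarrow> case_nat y s k \<in> X"
  by (cases k) (auto simp: OrbX)

lemma Finv_nonneg:
  assumes "z \<in> Orb_inv X F" "s \<in> Orb_inv X F" "a \<in> F_inv F s"
  shows "0 \<le> rho z a"
proof -
  obtain y where "a = case_nat y s" "y \<in> F (s 0)" using assms(3) by (auto simp: F_inv_def)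
  then show ?thesis using assms FX'[of "s 0"] OrbX[OF assms(2)]
    by (intro rho_nonneg_X) (auto simp: OrbX caseX)
qed

lemma pseudo_step:
  assumes "z \<in> Orb_inv X F" "s \<in> Orb_inv X F" "setdist_pt rho z (F_inv F s) < d"
  shows "\<exists>y\<in>F (s 0). rho z (case_nat y s) < d"
proof -
  have "F_inv F s \<noteq> {}" using Fne'[of "s 0"] OrbX[OF assms(2)] by (auto simp: F_inv_def)
  from setdist_lt[OF assms(3) this] obtain a where "a \<in> F_inv F s" "rho z a < d"
    using Finv_nonneg[OF assms(1,2)] by blast
  then show ?thesis by (auto simp: F_inv_def)
qed

lemma dir1:
  assumes shF: "shadowing X dist F"
  shows "shadowing (Orb_inv X F) rho (F_inv F)"
  unfolding shadowing_def
proof (intro allI impI)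
  fix \<epsilon> :: real assume "\<epsilon> > 0"
  obtain N :: nat where N: "(1/2)^N < \<epsilon>/2"
    using real_arch_pow_inv[of "\<epsilon>/2" "1/2::real"] \<open>\<epsilon>>0\<close> by auto
  define \<eta> where "\<eta> = \<epsilon>/2"
  have "\<eta> > 0" using \<open>\<epsilon>>0\<close> by (simp add: \<eta>_def)
  obtain \<delta>F where \<delta>F: "\<delta>F > 0" "\<forall>x. pseudo_orbit X dist F \<delta>F x \<longrightarrow> (\<exists>v. is_orbit X F v \<and> (\<forall>n. dist (x n) (v n) < \<eta>/2))"
    using shF \<open>\<eta>>0\<close> unfolding shadowing_def by (meson half_gt_zero)
  define C0 where "C0 = \<eta> / (2 * (real N + 1))"
  have C0: "C0 > 0" "real N * C0 < \<eta>/2"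
    using \<open>\<eta>>0\<close> by (auto simp: C0_def field_simps)
  define \<delta> where "\<delta> = min (\<delta>F/2) (C0 / 2^(N+2))"
  have "\<delta> > 0" using \<delta>F C0 by (simp add: \<delta>_def)
  show "\<exists>\<delta>>0. \<forall>z. pseudo_orbit (Orb_inv X F) rho (F_inv F) \<delta> z \<longrightarrow>
      (\<exists>w. is_orbit (Orb_inv X F) (F_inv F) w \<and> (\<forall>n. rho (z n) (w n) < \<epsilon>))"
  proof (intro exI[of _ \<delta>] conjI allI impI)
    show "\<delta> > 0" by fact
    fix z assume pz: "pseudo_orbit (Orb_inv X F) rho (F_inv F) \<delta> z"
    have zO: "\<And>n. z n \<in> Orb_inv X F" using pz by (simp add: pseudo_orbit_def)
    have "\<forall>n. \<exists>y\<in>F (z n 0). rho (z (Suc n)) (case_nat y (z n)) < \<delta>"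
      using pz zO pseudo_step unfolding pseudo_orbit_def by blast
    then obtain Y where Y: "\<And>n. Y n \<in> F (z n 0)" "\<And>n. rho (z (Suc n)) (case_nat (Y n) (z n)) < \<delta>"
      by metis
    have YX: "Y n \<in> X" for n using FX'[OF OrbX[OF zO]] Y(1) by blast
    have B: "dist (z (Suc n) k) (case_nat (Y n) (z n) k) \<le> 1" for n k
      by (rule dist1') (auto simp: OrbX[OF zO] caseX[OF zO YX])
    have step: "dist (z (Suc n) (Suc k)) (z n k) < C0" if "k < N" for n k
    proof -
      have "dist (z (Suc n) (Suc k)) (z n k) / 2 ^ Suc (Suc k) < \<delta>"
        using rho_coord[of "z (Suc n)" "case_nat (Y n) (z n)" "Suc k", OF B] Y(2)[of n] by simp
      then have "dist (z (Suc n) (Suc k)) (z n k) < \<delta> * 2 ^ Suc (Suc k)"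
        by (simp add: divide_simps)
      also have "\<dots> \<le> \<delta> * 2 ^ (N + 2)"
        using \<open>\<delta>>0\<close> that by (intro mult_left_mono power_increasing) auto
      also have "\<dots> \<le> C0" unfolding \<delta>_def by (simp add: field_simps min_def)
      finally show ?thesis .
    qed
    have step0: "dist (z (Suc n) 0) (Y n) < \<delta>F" for n
    proof -
      have "dist (z (Suc n) 0) (Y n) / 2 < \<delta>"
        using rho_coord[of "z (Suc n)" "case_nat (Y n) (z n)" 0, OF B] Y(2)[of n] by simp
      then show ?thesis unfolding \<delta>_def by linarith
    qed
    have chain: "k + j \<le> N \<Longrightarrow> dist (z (m + j) (k + j)) (z m k) \<le> real j * C0" for j m k
    proof (induction j)
      case 0 then show ?case by simp
    next
      case (Suc j)
      have "dist (z (m + Suc j) (k + Suc j)) (z m k) \<le>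
          dist (z (Suc (m + j)) (Suc (k + j))) (z (m+j) (k+j)) + dist (z (m + j) (k + j)) (z m k)"
        by (simp add: dist_triangle)
      also have "\<dots> \<le> C0 + real j * C0"
        using step[of "k+j" "m+j"] Suc by fastforce
      finally show ?case by (simp add: algebra_simps)
    qed
    define x where "x i = (if i < N then z 0 (N - i) else z (i - N) 0)" for i
    have xX: "x i \<in> X" for i by (simp add: x_def OrbX[OF zO])
    have "pseudo_orbit X dist F \<delta>F x"
      unfolding pseudo_orbit_def
    proof (intro conjI allI)
      fix i
      show "x i \<in> X" by (rule xX)
      show "setdist_pt dist (x (Suc i)) (F (x i)) < \<delta>F"
      proof (cases "i < N")
        case True
        have e: "x (Suc i) = z 0 (N - Suc i)" "x i = z 0 (Suc (N - Suc i))"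
          using True by (auto simp: x_def Suc_diff_Suc)
        have "x (Suc i) \<in> F (x i)" unfolding e by (rule OrbF[OF zO])
        then have "setdist_pt dist (x (Suc i)) (F (x i)) \<le> dist (x (Suc i)) (x (Suc i))"
          by (intro setdist_le) auto
        then show ?thesis using \<delta>F by simp
      next
        case False
        have e: "x (Suc i) = z (Suc (i - N)) 0" "x i = z (i - N) 0"
          using False by (auto simp: x_def Suc_diff_le)
        have "setdist_pt dist (x (Suc i)) (F (x i)) \<le> dist (x (Suc i)) (Y (i - N))"
          unfolding e by (intro setdist_le Y(1)) auto
        then show ?thesis using step0[of "i - N"] e by simp
      qed
    qed
    then obtain v where v: "is_orbit X F v" "\<And>n. dist (x n) (v n) < \<eta>/2" using \<delta>F by blast
    have vX: "v n \<in> X" and vF: "v (Suc n) \<in> F (v n)" for n using v(1) by (auto simp: is_orbit_def)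
    obtain b where b: "b \<in> Orb_inv X F" "b 0 = v 0" using back_chain' vX by blast
    define w where "w n k = (if k \<le> n + N then v (n + N - k) else b (k - n - N))" for n k
    have wO: "w n \<in> Orb_inv X F" for n
      unfolding Orb_inv_def
    proof (intro CollectI conjI allI)
      fix k
      show "w n k \<in> X" by (simp add: w_def vX OrbX[OF b(1)])
      show "w n k \<in> F (w n (Suc k))"
      proof -
        consider "Suc k \<le> n + N" | "k = n + N" | "k > n + N" by linarith
        then show ?thesis
        proof cases
          case 1
          then have "n + N - k = Suc (n + N - Suc k)" by linarith
          then show ?thesis using 1 vF[of "n + N - Suc k"] by (simp add: w_def)
        next
          case 2 then show ?thesis using b OrbF[OF b(1), of 0] by (simp add: w_def)
        next
          case 3
          then have "Suc k - n - N = Suc (k - n - N)" by linarith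
          then show ?thesis using 3 OrbF[OF b(1), of "k - n - N"] by (simp add: w_def)
        qed
      qed
    qed
    have wstep: "w (Suc n) = case_nat (v (Suc n + N)) (w n)" for n
    proof
      fix k show "w (Suc n) k = case_nat (v (Suc n + N)) (w n) k"
        by (cases k) (auto simp: w_def)
    qed
    have orb: "is_orbit (Orb_inv X F) (F_inv F) w"
      unfolding is_orbit_def
    proof (intro conjI allI)
      fix n show "w n \<in> Orb_inv X F" by (rule wO)
      have "v (Suc n + N) \<in> F (w n 0)" using vF[of "n + N"] by (simp add: w_def)
      then show "w (Suc n) \<in> F_inv F (w n)" unfolding F_inv_def wstep by blast
    qed
    have close: "dist (z n k) (w n k) < \<eta>" if "k < N" for n k
    proof -
      have wk: "w n k = v (n + N - k)" using that by (simp add: w_def)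
      have d1: "dist (x (n + N - k)) (v (n + N - k)) < \<eta>/2" by (rule v(2))
      have d2: "dist (z n k) (x (n + N - k)) \<le> real N * C0"
      proof (cases "n < k")
        case True
        have xe: "x (n + N - k) = z 0 (k - n)" using True that by (simp add: x_def)
        have "dist (z (0 + n) (k - n + n)) (z 0 (k - n)) \<le> real n * C0"
          by (rule chain) (use True that in simp)
        moreover have "real n * C0 \<le> real N * C0" using True that C0 by (intro mult_right_mono) auto
        ultimately show ?thesis using True xe by simp
      next
        case False
        have "\<not> (n + N - k < N)" "n + N - k - N = n - k" using False by linarith+
        then have xe: "x (n + N - k) = z (n - k) 0" by (simp add: x_def)
        have "dist (z (n - k + k) (0 + k)) (z (n - k) 0) \<le> real k * C0"
          by (rule chain) (use that in simp)
        moreover have "real k * C0 \<le> real N * C0" using that C0 by (intro mult_right_mono) auto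
        ultimately show ?thesis using False xe by simp
      qed
      have "dist (z n k) (w n k) \<le> dist (z n k) (x (n + N - k)) + dist (x (n + N - k)) (v (n + N - k))"
        unfolding wk by (rule dist_triangle)
      then show ?thesis using d1 d2 C0(2) by linarith
    qed
    have "rho (z n) (w n) < \<epsilon>" for n
    proof -
      have "rho (z n) (w n) < \<eta> + 1 / 2 ^ N"
        by (rule rho_small[OF _ \<open>\<eta>>0\<close> close]) (auto intro: dist1' OrbX[OF zO] OrbX[OF wO])
      then show ?thesis using N by (simp add: \<eta>_def power_one_over)
    qed
    then show "\<exists>w. is_orbit (Orb_inv X F) (F_inv F) w \<and> (\<forall>n. rho (z n) (w n) < \<epsilon>)"
      using orb by blast
  qed
qed


lemmas track' = track and Finv_nonneg' = Finv_nonneg and caseX' = caseX and OrbX' = OrbX and OrbF' = OrbF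


lemma dir2:
  assumes shI: "shadowing (Orb_inv X F) rho (F_inv F)"
  shows "shadowing X dist F"
  unfolding shadowing_def
proof (intro allI impI)
  fix \<epsilon> :: real assume "\<epsilon> > 0"
  obtain \<delta> where \<delta>: "\<delta> > 0" "\<forall>z. pseudo_orbit (Orb_inv X F) rho (F_inv F) \<delta> z \<longrightarrow>
      (\<exists>w. is_orbit (Orb_inv X F) (F_inv F) w \<and> (\<forall>n. rho (z n) (w n) < \<epsilon>/4))"
    using shI \<open>\<epsilon>>0\<close> unfolding shadowing_def by (metis divide_pos_pos zero_less_numeral)
  obtain M :: nat where M: "(1/2)^M < \<delta>/2"
    using real_arch_pow_inv[of "\<delta>/2" "1/2::real"] \<delta>(1) by auto
  define \<eta> where "\<eta> = min (\<delta>/4) (\<epsilon>/2)"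
  have "\<eta> > 0" using \<open>\<epsilon>>0\<close> \<delta>(1) by (simp add: \<eta>_def)
  obtain \<gamma> where \<gamma>: "\<gamma> > 0" "\<forall>p. (\<forall>i. p i \<in> X) \<longrightarrow> (\<forall>i. setdist_pt dist (p (Suc i)) (F (p i)) < \<gamma>) \<longrightarrow>
     (\<exists>u. u 0 = p 0 \<and> (\<forall>j\<le>Suc M. u j \<in> X \<and> dist (u j) (p j) < \<eta>) \<and> (\<forall>j<Suc M. u (Suc j) \<in> F (u j)))"
    using track'[OF \<open>\<eta>>0\<close>, of "Suc M"] by blast
  show "\<exists>\<delta>>0. \<forall>x. pseudo_orbit X dist F \<delta> x \<longrightarrow> (\<exists>w. is_orbit X F w \<and> (\<forall>n. dist (x n) (w n) < \<epsilon>))"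
  proof (intro exI[of _ \<gamma>] conjI allI impI)
    show "\<gamma> > 0" by fact
    fix x assume px: "pseudo_orbit X dist F \<gamma> x"
    have xX: "x n \<in> X" for n using px by (simp add: pseudo_orbit_def)
    obtain b0 where b0: "b0 \<in> Orb_inv X F" "b0 0 = x 0" using back_chain'' xX by blast
    define p where "p i = (if i < M then b0 (M - i) else x (i - M))" for i
    have pX: "p i \<in> X" for i by (simp add: p_def xX OrbX'[OF b0(1)])
    have pp: "setdist_pt dist (p (Suc i)) (F (p i)) < \<gamma>" for i
    proof (cases "i < M")
      case True
      have e: "p (Suc i) = b0 (M - Suc i)" "p i = b0 (Suc (M - Suc i))"
        using True b0(2) by (auto simp: p_def Suc_diff_Suc)
      have "p (Suc i) \<in> F (p i)" unfolding e by (rule OrbF'[OF b0(1)])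
      then have "setdist_pt dist (p (Suc i)) (F (p i)) \<le> dist (p (Suc i)) (p (Suc i))"
        by (intro setdist_le) auto
      then show ?thesis using \<gamma> by simp
    next
      case False
      have e: "p (Suc i) = x (Suc (i - M))" "p i = x (i - M)"
        using False by (auto simp: p_def Suc_diff_le)
      show ?thesis unfolding e using px by (simp add: pseudo_orbit_def)
    qed
    have "\<forall>n. \<exists>u. u 0 = p n \<and> (\<forall>j\<le>Suc M. u j \<in> X \<and> dist (u j) (p (n + j)) < \<eta>) \<and> (\<forall>j<Suc M. u (Suc j) \<in> F (u j))"
    proof
      fix n
      have "\<forall>i. (\<lambda>i. p (n + i)) i \<in> X" "\<forall>i. setdist_pt dist ((\<lambda>i. p (n + i)) (Suc i)) (F ((\<lambda>i. p (n + i)) i)) < \<gamma>"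
        using pX pp[of "n + i" for i] by simp_all
      then show "\<exists>u. u 0 = p n \<and> (\<forall>j\<le>Suc M. u j \<in> X \<and> dist (u j) (p (n + j)) < \<eta>) \<and> (\<forall>j<Suc M. u (Suc j) \<in> F (u j))"
        using \<gamma>(2)[rule_format, of "\<lambda>i. p (n + i)"] by simp
    qed
    then obtain u where u0: "\<And>n. u n 0 = p n"
      and uX: "\<And>n j. j \<le> Suc M \<Longrightarrow> u n j \<in> X"
      and ud: "\<And>n j. j \<le> Suc M \<Longrightarrow> dist (u n j) (p (n + j)) < \<eta>"
      and uF: "\<And>n j. j < Suc M \<Longrightarrow> u n (Suc j) \<in> F (u n j)"
      by metis
    have "\<forall>n. \<exists>b. b \<in> Orb_inv X F \<and> b 0 = u n 0" using back_chain'' uX by blast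
    then obtain bb where bb: "\<And>n. bb n \<in> Orb_inv X F" "\<And>n. bb n 0 = u n 0" by metis
    define z where "z n k = (if k \<le> M then u n (M - k) else bb n (k - M))" for n k
    have zO: "z n \<in> Orb_inv X F" for n
      unfolding Orb_inv_def
    proof (intro CollectI conjI allI)
      fix k
      show "z n k \<in> X" by (simp add: z_def uX OrbX'[OF bb(1)])
      show "z n k \<in> F (z n (Suc k))"
      proof -
        consider "k < M" | "k = M" | "k > M" by linarith
        then show ?thesis
        proof cases
          case 1
          then have "M - k = Suc (M - Suc k)" by linarith
          then show ?thesis using 1 uF[of "M - Suc k" n] by (simp add: z_def)
        next
          case 2 then show ?thesis using bb OrbF'[OF bb(1), of n 0] by (simp add: z_def)
        next
          case 3
          then have "Suc k - M = Suc (k - M)" by linarith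
          then show ?thesis using 3 OrbF'[OF bb(1), of n "k - M"] by (simp add: z_def)
        qed
      qed
    qed
    have uSX: "u n (Suc M) \<in> X" for n using uX by simp
    have "pseudo_orbit (Orb_inv X F) rho (F_inv F) \<delta> z"
      unfolding pseudo_orbit_def
    proof (intro conjI allI)
      fix n
      show "z n \<in> Orb_inv X F" by (rule zO)
      have mem: "case_nat (u n (Suc M)) (z n) \<in> F_inv F (z n)"
        using uF[of M n] by (auto simp: F_inv_def z_def)
      have "setdist_pt rho (z (Suc n)) (F_inv F (z n)) \<le> rho (z (Suc n)) (case_nat (u n (Suc M)) (z n))"
        by (rule setdist_le[OF mem]) (rule Finv_nonneg'[OF zO zO])
      also have "\<dots> < 2 * \<eta> + 1 / 2 ^ Suc M"
      proof (rule rho_small)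
        fix k show "dist (z (Suc n) k) (case_nat (u n (Suc M)) (z n) k) \<le> 1"
          by (rule dist1'') (auto simp: OrbX'[OF zO] caseX'[OF zO uSX])
        show "2 * \<eta> > 0" using \<open>\<eta>>0\<close> by simp
      next
        fix k assume k: "k < Suc M"
        show "dist (z (Suc n) k) (case_nat (u n (Suc M)) (z n) k) < 2 * \<eta>"
        proof (cases k)
          case 0
          have a: "dist (u (Suc n) M) (p (Suc n + M)) < \<eta>" by (rule ud) simp
          have b: "dist (u n (Suc M)) (p (n + Suc M)) < \<eta>" by (rule ud) simp
          have "dist (u (Suc n) M) (u n (Suc M)) \<le> dist (u (Suc n) M) (p (Suc n + M)) + dist (u n (Suc M)) (p (Suc n + M))"
            by (rule dist_triangle2)
          then show ?thesis using a b 0 by (simp add: z_def)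
        next
          case (Suc k')
          then have k': "k' < M" using k by simp
          have a: "dist (u (Suc n) (M - Suc k')) (p (Suc n + (M - Suc k'))) < \<eta>" by (rule ud) simp
          have b: "dist (u n (M - k')) (p (n + (M - k'))) < \<eta>" by (rule ud) simp
          have e: "Suc n + (M - Suc k') = n + (M - k')" using k' by simp
          have "dist (u (Suc n) (M - Suc k')) (u n (M - k')) \<le> dist (u (Suc n) (M - Suc k')) (p (n + (M - k'))) + dist (u n (M - k')) (p (n + (M - k')))"
            by (rule dist_triangle2)
          then show ?thesis using a b e k' Suc by (simp add: z_def)
        qed
      qed
      also have "\<dots> \<le> \<delta>"
      proof -
        have "1 / 2 ^ Suc M \<le> (1/2::real)^M" by (simp add: power_one_over divide_simps)
        then show ?thesis using M \<eta>_def by linarith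
      qed
      finally show "setdist_pt rho (z (Suc n)) (F_inv F (z n)) < \<delta>" .
    qed
    then obtain w where w: "is_orbit (Orb_inv X F) (F_inv F) w" "\<And>n. rho (z n) (w n) < \<epsilon>/4"
      using \<delta>(2) by blast
    have wO: "w n \<in> Orb_inv X F" for n using w(1) by (simp add: is_orbit_def)
    have orb: "is_orbit X F (\<lambda>n. w n 0)"
      unfolding is_orbit_def
    proof (intro conjI allI)
      fix n show "w n 0 \<in> X" by (rule OrbX'[OF wO])
      have "w (Suc n) \<in> F_inv F (w n)" using w(1) by (simp add: is_orbit_def)
      then show "w (Suc n) 0 \<in> F (w n 0)" by (auto simp: F_inv_def)
    qed
    have "dist (x n) (w n 0) < \<epsilon>" for n
    proof -
      have "dist (z n 0) (w n 0) / 2 ^ Suc 0 \<le> rho (z n) (w n)"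
        by (rule rho_coord) (rule dist1''; rule OrbX'; rule zO wO)
      then have d1: "dist (z n 0) (w n 0) < \<epsilon>/2" using w(2)[of n] by simp
      have "p (n + M) = x n" by (simp add: p_def)
      then have d2: "dist (z n 0) (x n) < \<eta>" using ud[of M n] by (simp add: z_def)
      have "dist (x n) (w n 0) \<le> dist (z n 0) (x n) + dist (z n 0) (w n 0)" by (rule dist_triangle3)
      then show ?thesis using d1 d2 \<eta>_def by linarith
    qed
    then show "\<exists>w. is_orbit X F w \<and> (\<forall>n. dist (x n) (w n) < \<epsilon>)" using orb by blast
  qed
qed


end

theorem mainTheorem12:
  fixes X :: "'a::metric_space set" and F :: "'a \<Rightarrow> 'a set"
  assumes "compact X" and "diameter X = 1"
    and "setmap_into_compacts X F"
    and "setmap_continuous_on X F"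
    and "setmap_onto X F"
  shows "shadowing X dist F \<longleftrightarrow> shadowing (Orb_inv X F) rho (F_inv F)"
  using dir1[OF assms] dir2[OF assms] by blast

end
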